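(* In the framework of the context, let $\Gamma\subseteq Sen(\Sigma)$ and $\psi\in Sen(\Sigma)$, and let $\varphi\in Sen(\Sigma)$ be an invariant formula. Then $\Gamma\cup\{\varphi\}\vdash_\Sigma\psi$ if and only if $\Gamma\vdash_\Sigma\varphi\Rightarrow\psi$.
   Context: Framework. $\mathcal{I}$ is a stratified institution: signatures $\Sigma$, formulas $Sen(\Sigma)$, models $Mod(\Sigma)$, a set of states $[\![M]\!]_\Sigma$ for each model (functorial along model morphisms $\mu$, giving maps $[\![\mu]\!]_\Sigma$), and satisfaction $M\models^\eta_\Sigma\varphi$; $M\models_\Sigma\varphi$ iff $M\models^\eta_\Sigma\varphi$ for all states $\eta$; $[\![M]\!]_\Sigma(\varphi)=\{\eta\mid M\models^\eta_\Sigma\varphi\}$; $\varphi\preceq_M\psi$ iff $[\![M]\!]_\Sigma(\varphi)\subseteq[\![M]\!]_\Sigma(\psi)$, $\equiv_M$ the corresponding equality; $\Gamma\models\varphi$ iff every model satisfying all of $\Gamma$ satisfies $\varphi$. $\mathcal{I}$ has semantic $\neg,\wedge,\vee,\Rightarrow$ (complement, intersection, union, and complement-union on state sets). There is an index set $I$ and for each $i\in I$ unary operations $E^i,D^i$ on formulas with, for all $M$, $\varphi,\psi$: $E^i(\varphi)\equiv_M\neg D^i(\neg\varphi)$, $E^i(\varphi\wedge\psi)\equiv_M E^i(\varphi)\wedge E^i(\psi)$, $D^i(\varphi\vee\psi)\equiv_M D^i(\varphi)\vee D^i(\psi)$, $E^i(\varphi)\preceq_M\varphi\preceq_M D^i(\varphi)$,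 and $\varphi\models E^i(\varphi)$. There is a subfunctor $Sen^{base}\subseteq Sen$ with each $Sen^{base}(\Sigma)$ basic, and $Sen(\Sigma)$ is the least set containing $Sen^{base}(\Sigma)$ closed under $\neg,\wedge,\vee,\Rightarrow,E^i,D^i$. A formula $\varphi$ is invariant if $\varphi\preceq_M E^i(\varphi)$ for all $i\in I$ and all $M$. $\varphi'$ is an instance of $\varphi$ for $i$ if $E^i(\varphi)\preceq_M\varphi'$ for all $M$. A tautology instance is a formula obtained from a classical propositional tautology by substituting formulas for its variables. Proof system: axioms are all tautology instances; $E^i(\varphi)\Leftrightarrow\neg D^i(\neg\varphi)$; $E^i(\varphi\Rightarrow\psi)\Rightarrow(E^i(\varphi)\Rightarrow E^i(\psi))$; $E^i(\varphi)\Rightarrow\varphi'$ whenever $\varphi'$ is an instance of $\varphi$ for $i$; $\varphi\Rightarrow E^i(\varphi)$ whenever $\varphi$ is invariant. $\Gamma\vdash_\Sigma\varphi$ is the least relation such that: $\varphi\in\Gamma$ implies $\Gamma\vdash_\Sigma\varphi$; every axiom $\varphi$ gives $\Gamma\vdash_\Sigma\varphi$; $\Gamma\vdash_\Sigma\varphi$ and $\Delta\vdash_\Sigma\varphi\Rightarrow\psi$ give $\Gamma\cup\Delta\vdash_\Sigma\psi$ (Modus Ponens); $\Gamma\vdash_\Sigma\varphi$ gives $\Gamma\vdash_\Sigma E^i(\varphi)$ (Necessity). *)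

theory Defs
  imports Main
begin

text \<open>A stratified institution, restricted to one fixed signature Sigma.
  'f: formulas, 'm: models, 's: states, 'i: the index set type.\<close>

record ('f,'m,'s,'i) frame =
  sen  :: "'f set"
  base :: "'f set"
  mods :: "'m set"
  hom  :: "'m \<Rightarrow> 'm \<Rightarrow> bool"     (* there is a model morphism M -> N *)
  st   :: "'m \<Rightarrow> 's set"
  sat  :: "'m \<Rightarrow> 's \<Rightarrow> 'f \<Rightarrow> bool"
  neg  :: "'f \<Rightarrow> 'f"
  cnj  :: "'f \<Rightarrow> 'f \<Rightarrow> 'f"
  dsj  :: "'f \<Rightarrow> 'f \<Rightarrow> 'f"
  imp  :: "'f \<Rightarrow> 'f \<Rightarrow> 'f"
  idx  :: "'i set"
  Eop  :: "'i \<Rightarrow> 'f \<Rightarrow> 'f"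
  Dop  :: "'i \<Rightarrow> 'f \<Rightarrow> 'f"

definition sem :: "('f,'m,'s,'i) frame \<Rightarrow> 'm \<Rightarrow> 'f \<Rightarrow> 's set" where
  "sem F M \<phi> = {\<eta> \<in> st F M. sat F M \<eta> \<phi>}"

definition models :: "('f,'m,'s,'i) frame \<Rightarrow> 'm \<Rightarrow> 'f \<Rightarrow> bool" where
  "models F M \<phi> \<longleftrightarrow> (\<forall>\<eta>\<in>st F M. sat F M \<eta> \<phi>)"

definition sem_entails :: "('f,'m,'s,'i) frame \<Rightarrow> 'f set \<Rightarrow> 'f \<Rightarrow> bool" where
  "sem_entails F \<Gamma> \<phi> \<longleftrightarrow>
     (\<forall>M\<in>mods F. (\<forall>\<gamma>\<in>\<Gamma>. models F M \<gamma>) \<longrightarrow> models F M \<phi>)"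

definition basic :: "('f,'m,'s,'i) frame \<Rightarrow> 'f set \<Rightarrow> bool" where
  "basic F B \<longleftrightarrow> (\<exists>MB\<in>mods F. \<forall>M\<in>mods F.
      (\<forall>\<rho>\<in>B. models F M \<rho>) \<longleftrightarrow> hom F MB M)"

inductive_set gen :: "('f,'m,'s,'i) frame \<Rightarrow> 'f set" for F where
  gen_base: "\<phi> \<in> base F \<Longrightarrow> \<phi> \<in> gen F"
| gen_neg: "\<phi> \<in> gen F \<Longrightarrow> neg F \<phi> \<in> gen F"
| gen_cnj: "\<phi> \<in> gen F \<Longrightarrow> \<psi> \<in> gen F \<Longrightarrow> cnj F \<phi> \<psi> \<in> gen F"
| gen_dsj: "\<phi> \<in> gen F \<Longrightarrow> \<psi> \<in> gen F \<Longrightarrow> dsj F \<phi> \<psi> \<in> gen F"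
| gen_imp: "\<phi> \<in> gen F \<Longrightarrow> \<psi> \<in> gen F \<Longrightarrow> imp F \<phi> \<psi> \<in> gen F"
| gen_E: "i \<in> idx F \<Longrightarrow> \<phi> \<in> gen F \<Longrightarrow> Eop F i \<phi> \<in> gen F"
| gen_D: "i \<in> idx F \<Longrightarrow> \<phi> \<in> gen F \<Longrightarrow> Dop F i \<phi> \<in> gen F"

definition framework :: "('f,'m,'s,'i) frame \<Rightarrow> bool" where
  "framework F \<longleftrightarrow>
     sen F = gen F \<and> basic F (base F) \<and>
     (\<forall>M\<in>mods F. \<forall>\<phi>\<in>sen F. \<forall>\<psi>\<in>sen F.
        sem F M (neg F \<phi>) = st F M - sem F M \<phi> \<and>
        sem F M (cnj F \<phi> \<psi>) = sem F M \<phi> \<inter> sem F M \<psi> \<and>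
        sem F M (dsj F \<phi> \<psi>) = sem F M \<phi> \<union> sem F M \<psi> \<and>
        sem F M (imp F \<phi> \<psi>) = (st F M - sem F M \<phi>) \<union> sem F M \<psi> \<and>
        (\<forall>i\<in>idx F.
          sem F M (Eop F i \<phi>) = sem F M (neg F (Dop F i (neg F \<phi>))) \<and>
          sem F M (Eop F i (cnj F \<phi> \<psi>)) = sem F M (cnj F (Eop F i \<phi>) (Eop F i \<psi>)) \<and>
          sem F M (Dop F i (dsj F \<phi> \<psi>)) = sem F M (dsj F (Dop F i \<phi>) (Dop F i \<psi>)) \<and>
          sem F M (Eop F i \<phi>) \<subseteq> sem F M \<phi> \<and>
          sem F M \<phi> \<subseteq> sem F M (Dop F i \<phi>))) \<and>
     (\<forall>i\<in>idx F. \<forall>\<phi>\<in>sen F. sem_entails F {\<phi>} (Eop F i \<phi>))"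

definition invariant :: "('f,'m,'s,'i) frame \<Rightarrow> 'f \<Rightarrow> bool" where
  "invariant F \<phi> \<longleftrightarrow> (\<forall>i\<in>idx F. \<forall>M\<in>mods F. sem F M \<phi> \<subseteq> sem F M (Eop F i \<phi>))"

definition is_instance :: "('f,'m,'s,'i) frame \<Rightarrow> 'i \<Rightarrow> 'f \<Rightarrow> 'f \<Rightarrow> bool" where
  "is_instance F i \<phi> \<phi>' \<longleftrightarrow> (\<forall>M\<in>mods F. sem F M (Eop F i \<phi>) \<subseteq> sem F M \<phi>')"

datatype pform = PVar nat | PNeg pform | PConj pform pform | PDisj pform pform | PImp pform pform

fun peval :: "(nat \<Rightarrow> bool) \<Rightarrow> pform \<Rightarrow> bool" where
  "peval v (PVar n) = v n"
| "peval v (PNeg p) = (\<not> peval v p)"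
| "peval v (PConj p q) = (peval v p \<and> peval v q)"
| "peval v (PDisj p q) = (peval v p \<or> peval v q)"
| "peval v (PImp p q) = (peval v p \<longrightarrow> peval v q)"

definition tautology :: "pform \<Rightarrow> bool" where
  "tautology p \<longleftrightarrow> (\<forall>v. peval v p)"

fun psubst :: "('f,'m,'s,'i) frame \<Rightarrow> (nat \<Rightarrow> 'f) \<Rightarrow> pform \<Rightarrow> 'f" where
  "psubst F \<sigma> (PVar n) = \<sigma> n"
| "psubst F \<sigma> (PNeg p) = neg F (psubst F \<sigma> p)"
| "psubst F \<sigma> (PConj p q) = cnj F (psubst F \<sigma> p) (psubst F \<sigma> q)"
| "psubst F \<sigma> (PDisj p q) = dsj F (psubst F \<sigma> p) (psubst F \<sigma> q)"
| "psubst F \<sigma> (PImp p q) = imp F (psubst F \<sigma> p) (psubst F \<sigma> q)"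

definition tautology_instance :: "('f,'m,'s,'i) frame \<Rightarrow> 'f \<Rightarrow> bool" where
  "tautology_instance F \<phi> \<longleftrightarrow>
     (\<exists>p \<sigma>. tautology p \<and> (\<forall>n. \<sigma> n \<in> sen F) \<and> \<phi> = psubst F \<sigma> p)"

definition iff :: "('f,'m,'s,'i) frame \<Rightarrow> 'f \<Rightarrow> 'f \<Rightarrow> 'f" where
  "iff F \<phi> \<psi> = cnj F (imp F \<phi> \<psi>) (imp F \<psi> \<phi>)"

definition axiom :: "('f,'m,'s,'i) frame \<Rightarrow> 'f \<Rightarrow> bool" where
  "axiom F \<chi> \<longleftrightarrow>
     tautology_instance F \<chi>
   \<or> (\<exists>i\<in>idx F. \<exists>\<phi>\<in>sen F. \<chi> = iff F (Eop F i \<phi>) (neg F (Dop F i (neg F \<phi>))))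
   \<or> (\<exists>i\<in>idx F. \<exists>\<phi>\<in>sen F. \<exists>\<psi>\<in>sen F.
        \<chi> = imp F (Eop F i (imp F \<phi> \<psi>)) (imp F (Eop F i \<phi>) (Eop F i \<psi>)))
   \<or> (\<exists>i\<in>idx F. \<exists>\<phi>\<in>sen F. \<exists>\<phi>'\<in>sen F.
        is_instance F i \<phi> \<phi>' \<and> \<chi> = imp F (Eop F i \<phi>) \<phi>')
   \<or> (\<exists>i\<in>idx F. \<exists>\<phi>\<in>sen F. invariant F \<phi> \<and> \<chi> = imp F \<phi> (Eop F i \<phi>))"

inductive derivable :: "('f,'m,'s,'i) frame \<Rightarrow> 'f set \<Rightarrow> 'f \<Rightarrow> bool" for F where
  der_hyp: "\<phi> \<in> \<Gamma> \<Longrightarrow> derivable F \<Gamma> \<phi>"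
| der_ax: "axiom F \<phi> \<Longrightarrow> derivable F \<Gamma> \<phi>"
| der_mp: "derivable F \<Gamma> \<phi> \<Longrightarrow> derivable F \<Delta> (imp F \<phi> \<psi>) \<Longrightarrow> \<psi> \<in> sen F
           \<Longrightarrow> derivable F (\<Gamma> \<union> \<Delta>) \<psi>"
| der_nec: "derivable F \<Gamma> \<phi> \<Longrightarrow> i \<in> idx F \<Longrightarrow> derivable F \<Gamma> (Eop F i \<phi>)"

end

theory Submission
  imports Defs
begin

lemma fw_sen: "framework F \<Longrightarrow> sen F = gen F"
  unfolding framework_def by (elim conjE)

lemma sen_imp: "framework F \<Longrightarrow> a \<in> sen F \<Longrightarrow> b \<in> sen F \<Longrightarrow> imp F a b \<in> sen F"
  by (simp only: fw_sen gen.gen_imp)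

lemma sen_E: "framework F \<Longrightarrow> i \<in> idx F \<Longrightarrow> a \<in> sen F \<Longrightarrow> Eop F i a \<in> sen F"
  by (simp only: fw_sen gen.gen_E)

lemma sen_neg: "framework F \<Longrightarrow> a \<in> sen F \<Longrightarrow> neg F a \<in> sen F"
  by (simp only: fw_sen gen.gen_neg)

lemma sen_cnj: "framework F \<Longrightarrow> a \<in> sen F \<Longrightarrow> b \<in> sen F \<Longrightarrow> cnj F a b \<in> sen F"
  by (simp only: fw_sen gen.gen_cnj)

lemma sen_dsj: "framework F \<Longrightarrow> a \<in> sen F \<Longrightarrow> b \<in> sen F \<Longrightarrow> dsj F a b \<in> sen F"
  by (simp only: fw_sen gen.gen_dsj)

lemma sen_D: "framework F \<Longrightarrow> i \<in> idx F \<Longrightarrow> a \<in> sen F \<Longrightarrow> Dop F i a \<in> sen F"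
  by (simp only: fw_sen gen.gen_D)

lemma sen_psubst: "framework F \<Longrightarrow> \<forall>n. \<sigma> n \<in> sen F \<Longrightarrow> psubst F \<sigma> p \<in> sen F"
proof (induction p)
  case (PVar x) then show ?case by simp
next
  case (PNeg p) then show ?case using sen_neg by simp
next
  case (PConj p q) then show ?case using sen_cnj by simp
next
  case (PDisj p q) then show ?case using sen_dsj by simp
next
  case (PImp p q) then show ?case using sen_imp by simp
qed

definition sig3 :: "'f \<Rightarrow> 'f \<Rightarrow> 'f \<Rightarrow> nat \<Rightarrow> 'f" where
  "sig3 a b c n = (if n = 0 then a else if n = 1 then b else c)"

lemma sig3_sen: "a \<in> S \<Longrightarrow> b \<in> S \<Longrightarrow> c \<in> S \<Longrightarrow> \<forall>n. sig3 a b c n \<in> S"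
  by (simp add: sig3_def)

lemma ax_K1: "a \<in> sen F \<Longrightarrow> b \<in> sen F \<Longrightarrow> axiom F (imp F a (imp F b a))"
  unfolding axiom_def tautology_instance_def
  apply (rule disjI1)
  apply (rule exI[of _ "PImp (PVar 0) (PImp (PVar 1) (PVar 0))"])
  apply (rule exI[of _ "sig3 a b a"])
  by (simp add: tautology_def sig3_def)

lemma ax_S: "a \<in> sen F \<Longrightarrow> b \<in> sen F \<Longrightarrow> c \<in> sen F \<Longrightarrow>
   axiom F (imp F (imp F a (imp F b c)) (imp F (imp F a b) (imp F a c)))"
  unfolding axiom_def tautology_instance_def
  apply (rule disjI1)
  apply (rule exI[of _ "PImp (PImp (PVar 0) (PImp (PVar 1) (PVar 2))) (PImp (PImp (PVar 0) (PVar 1)) (PImp (PVar 0) (PVar 2)))"])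
  apply (rule exI[of _ "sig3 a b c"])
  by (simp add: tautology_def sig3_def)

lemma ax_T: "a \<in> sen F \<Longrightarrow> b \<in> sen F \<Longrightarrow> c \<in> sen F \<Longrightarrow>
   axiom F (imp F (imp F a b) (imp F (imp F b c) (imp F a c)))"
  unfolding axiom_def tautology_instance_def
  apply (rule disjI1)
  apply (rule exI[of _ "PImp (PImp (PVar 0) (PVar 1)) (PImp (PImp (PVar 1) (PVar 2)) (PImp (PVar 0) (PVar 2)))"])
  apply (rule exI[of _ "sig3 a b c"])
  by (simp add: tautology_def sig3_def)

lemma ax_I: "a \<in> sen F \<Longrightarrow> axiom F (imp F a a)"
  unfolding axiom_def tautology_instance_def
  apply (rule disjI1)
  apply (rule exI[of _ "PImp (PVar 0) (PVar 0)"])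
  apply (rule exI[of _ "sig3 a a a"])
  by (simp add: tautology_def sig3_def)

lemma mp1: "derivable F \<Gamma> a \<Longrightarrow> derivable F \<Gamma> (imp F a b) \<Longrightarrow> b \<in> sen F \<Longrightarrow> derivable F \<Gamma> b"
  using der_mp[of F \<Gamma> a \<Gamma> b] by simp

lemma axiom_sen:
  assumes fw: "framework F" and ax: "axiom F \<chi>" shows "\<chi> \<in> sen F"
proof -
  note gi = sen_imp[OF fw] and ge = sen_E[OF fw] and gn = sen_neg[OF fw] and gc = sen_cnj[OF fw]
    and gd = sen_dsj[OF fw] and gD = sen_D[OF fw] and ps = sen_psubst[OF fw]
  from ax show ?thesis unfolding axiom_def tautology_instance_def
  proof (elim disjE exE conjE bexE)
    fix p \<sigma> assume "\<forall>n. \<sigma> n \<in> sen F" "\<chi> = psubst F \<sigma> p"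
    then show ?thesis using ps by simp
  next
    fix i a assume "i \<in> idx F" "a \<in> sen F" "\<chi> = iff F (Eop F i a) (neg F (Dop F i (neg F a)))"
    then show ?thesis unfolding iff_def by (simp add: gi ge gn gc gD)
  next
    fix i a b assume "i \<in> idx F" "a \<in> sen F" "b \<in> sen F"
      "\<chi> = imp F (Eop F i (imp F a b)) (imp F (Eop F i a) (Eop F i b))"
    then show ?thesis by (simp add: gi ge)
  next
    fix i a b assume "i \<in> idx F" "a \<in> sen F" "b \<in> sen F" "\<chi> = imp F (Eop F i a) b"
    then show ?thesis by (simp add: gi ge)
  next
    fix i a assume "i \<in> idx F" "a \<in> sen F" "\<chi> = imp F a (Eop F i a)"
    then show ?thesis by (simp add: gi ge)
  qed
qed

lemma derivable_sen:
  "derivable F \<Delta> \<chi> \<Longrightarrow> framework F \<Longrightarrow> \<Delta> \<subseteq> sen F \<Longrightarrow> \<chi> \<in> sen F"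
  by (induction rule: derivable.induct) (auto simp: axiom_sen sen_E)

lemma ded:
  assumes fw: "framework F" and G: "\<Gamma> \<subseteq> sen F" and ph: "\<phi> \<in> sen F" and inv: "invariant F \<phi>"
  shows "derivable F \<Delta> \<chi> \<Longrightarrow> \<Delta> \<subseteq> \<Gamma> \<union> {\<phi>} \<Longrightarrow> derivable F \<Gamma> (imp F \<phi> \<chi>) \<and> \<chi> \<in> sen F"
proof (induction rule: derivable.induct)
  case (der_hyp a \<Delta>)
  then have as: "a \<in> sen F" using G ph by auto
  have pa: "imp F \<phi> a \<in> sen F" by (rule sen_imp[OF fw ph as])
  show ?case
  proof (cases "a \<in> \<Gamma>")
    case True
    have "derivable F \<Gamma> (imp F \<phi> a)"
      by (rule mp1[OF derivable.der_hyp[OF True] derivable.der_ax[OF ax_K1[OF as ph]] pa])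
    then show ?thesis using as by simp
  next
    case False
    then have "a = \<phi>" using der_hyp by auto
    then show ?thesis using ph by (simp add: ax_I derivable.der_ax)
  qed
next
  case (der_ax a \<Delta>)
  have as: "a \<in> sen F" by (rule axiom_sen[OF fw der_ax.hyps])
  have pa: "imp F \<phi> a \<in> sen F" by (rule sen_imp[OF fw ph as])
  have "derivable F \<Gamma> (imp F \<phi> a)"
    by (rule mp1[OF derivable.der_ax[OF der_ax.hyps] derivable.der_ax[OF ax_K1[OF as ph]] pa])
  then show ?case using as by simp
next
  case (der_mp \<Gamma>1 a \<Delta> b)
  have s1: "\<Gamma>1 \<subseteq> \<Gamma> \<union> {\<phi>}" and s2: "\<Delta> \<subseteq> \<Gamma> \<union> {\<phi>}" using der_mp.prems by auto
  have r1: "derivable F \<Gamma> (imp F \<phi> a) \<and> a \<in> sen F" by (rule der_mp.IH(1)[OF s1])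
  have r2: "derivable F \<Gamma> (imp F \<phi> (imp F a b))" using der_mp.IH(2)[OF s2] by (rule conjunct1)
  have h1: "derivable F \<Gamma> (imp F \<phi> a)" and as: "a \<in> sen F" using r1 by auto
  have bs: "b \<in> sen F" by fact
  have x1: "imp F \<phi> a \<in> sen F" by (rule sen_imp[OF fw ph as])
  have x2: "imp F \<phi> b \<in> sen F" by (rule sen_imp[OF fw ph bs])
  have x3: "imp F (imp F \<phi> a) (imp F \<phi> b) \<in> sen F" by (rule sen_imp[OF fw x1 x2])
  have "derivable F \<Gamma> (imp F (imp F \<phi> a) (imp F \<phi> b))"
    by (rule mp1[OF r2 derivable.der_ax[OF ax_S[OF ph as bs]] x3])
  then have "derivable F \<Gamma> (imp F \<phi> b)" by (rule mp1[OF h1 _ x2])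
  then show ?case using bs by simp
next
  case (der_nec \<Delta> a i)
  have r1: "derivable F \<Gamma> (imp F \<phi> a) \<and> a \<in> sen F" by (rule der_nec.IH[OF der_nec.prems])
  have h1: "derivable F \<Gamma> (imp F \<phi> a)" and as: "a \<in> sen F" using r1 by auto
  have i: "i \<in> idx F" by fact
  have Ea: "Eop F i a \<in> sen F" by (rule sen_E[OF fw i as])
  have Ep: "Eop F i \<phi> \<in> sen F" by (rule sen_E[OF fw i ph])
  have y1: "imp F (Eop F i \<phi>) (Eop F i a) \<in> sen F" by (rule sen_imp[OF fw Ep Ea])
  have y2: "imp F \<phi> (Eop F i a) \<in> sen F" by (rule sen_imp[OF fw ph Ea])
  have y3: "imp F (imp F (Eop F i \<phi>) (Eop F i a)) (imp F \<phi> (Eop F i a)) \<in> sen F"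
    by (rule sen_imp[OF fw y1 y2])
  have k: "axiom F (imp F (Eop F i (imp F \<phi> a)) (imp F (Eop F i \<phi>) (Eop F i a)))"
    unfolding axiom_def using i ph as by blast
  have d1: "derivable F \<Gamma> (imp F (Eop F i \<phi>) (Eop F i a))"
    by (rule mp1[OF derivable.der_nec[OF h1 i] derivable.der_ax[OF k] y1])
  have iv: "axiom F (imp F \<phi> (Eop F i \<phi>))"
    unfolding axiom_def using i ph inv by blast
  have d2: "derivable F \<Gamma> (imp F (imp F (Eop F i \<phi>) (Eop F i a)) (imp F \<phi> (Eop F i a)))"
    by (rule mp1[OF derivable.der_ax[OF iv] derivable.der_ax[OF ax_T[OF ph Ep Ea]] y3])
  have "derivable F \<Gamma> (imp F \<phi> (Eop F i a))" by (rule mp1[OF d1 d2 y2])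
  then show ?case using Ea by simp
qed

theorem mainTheorem8:
  fixes F :: "('f,'m,'s,'i) frame"
  assumes "framework F"
    and "\<Gamma> \<subseteq> sen F" and "\<psi> \<in> sen F" and "\<phi> \<in> sen F"
    and "invariant F \<phi>"
  shows "derivable F (\<Gamma> \<union> {\<phi>}) \<psi> \<longleftrightarrow> derivable F \<Gamma> (imp F \<phi> \<psi>)"
proof
  assume "derivable F (\<Gamma> \<union> {\<phi>}) \<psi>"
  then show "derivable F \<Gamma> (imp F \<phi> \<psi>)" using ded[OF assms(1,2,4,5)] by blast
next
  assume h: "derivable F \<Gamma> (imp F \<phi> \<psi>)"
  have "derivable F ({\<phi>} \<union> \<Gamma>) \<psi>"
    by (rule der_mp[OF der_hyp h assms(3)]) simp
  then show "derivable F (\<Gamma> \<union> {\<phi>}) \<psi>" by (simp add: Un_commute)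
qed

end
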